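(* Let $\mathscr C$ be a directed cycle with node set $\{1,\dots,l\}$, each node $i$ carrying an integer label ${\rm label}(i)$ (different nodes may share a label). For a node $a$ of $\mathscr C$, let $a^-$ denote its predecessor in $\mathscr C$ (the unique node with an edge $a^-\to a$). Consider a random process $(i_k,j_k)_{k\ge1}$ of pairs of nodes of $\mathscr C$, with history $W_k=(i_\tau,j_\tau)_{\tau=1}^k$, such that for some $\gamma>0$ and all $k$: if ${\rm label}(i_k)\ne{\rm label}(j_k)$, then $(i_{k+1},j_{k+1})\in\{i_k,i_k^-\}\times\{j_k,j_k^-\}$ almost surely and $\mathbb P((i_{k+1},j_{k+1})=(i_k,j_k^-)\mid W_k)\ge\gamma$, $\mathbb P((i_{k+1},j_{k+1})=(i_k^-,j_k)\mid W_k)\ge\gamma$, $\mathbb P((i_{k+1},j_{k+1})\in\{(i_k,j_k),(i_k^-,j_k^-)\}\mid W_k)\ge\gamma$; if ${\rm label}(i_k)={\rm label}(j_k)$, then $\mathbb P((i_{k+1},j_{k+1})=(i_k,j_k)\mid W_k)=1$. Then there exist an integer $k^*>0$ and numbers $\mu_k\in(0,1)$ such that for every initial pair $(i_1,j_1)$, $\mathbb P({\rm label}(i_{k+1})={\rm label}(j_{k+1})\mid i_1,j_1)\ge\mu_k$ for all $k\ge k^*$. *)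

theory Defs
  imports "HOL-Probability.Probability"
begin

text \<open>A directed cycle on the node set {1..l}, described by its predecessor map:
  pred a is the unique node with an edge pred a -> a.\<close>
definition directed_cycle_pred :: "nat \<Rightarrow> (nat \<Rightarrow> nat) \<Rightarrow> bool" where
  "directed_cycle_pred l pred \<longleftrightarrow>
     l \<ge> 1 \<and> bij_betw pred {1..l} {1..l} \<and>
     (\<forall>a\<in>{1..l}. \<forall>b\<in>{1..l}. \<exists>n. (pred ^^ n) a = b)"

definition hist :: "(nat \<Rightarrow> 'a \<Rightarrow> nat \<times> nat) \<Rightarrow> nat \<Rightarrow> 'a \<Rightarrow> (nat \<times> nat) list" where
  "hist X k \<omega> = map (\<lambda>\<tau>. X \<tau> \<omega>) [1..<Suc k]"

end

theory Submission
  imports Defs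
begin

lemma hist_iff: "hist X k \<omega> = h \<longleftrightarrow> length h = k \<and> (\<forall>\<tau>. \<tau> < k \<longrightarrow> X (Suc \<tau>) \<omega> = h ! \<tau>)"
proof -
  have L: "length (map (\<lambda>\<tau>. X \<tau> \<omega>) [1..<Suc k]) = k" by simp
  have N: "map (\<lambda>\<tau>. X \<tau> \<omega>) [1..<Suc k] ! i = X (Suc i) \<omega>" if "i < k" for i
    using that by (simp del: upt_Suc)
  show ?thesis
    unfolding hist_def list_eq_iff_nth_eq L using N by (metis)
qed

lemma hist_pred:
  assumes "\<And>k. k \<ge> 1 \<Longrightarrow> X k \<in> measurable M (count_space UNIV)"
  shows "Measurable.pred M (\<lambda>\<omega>. hist X k \<omega> = h)"
proof -
  have m: "\<And>\<tau>. Measurable.pred M (\<lambda>\<omega>. X (Suc \<tau>) \<omega> = h ! \<tau>)"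
    by (rule pred_count_space_const1[OF assms]) simp
  have c: "Measurable.pred M (\<lambda>\<omega>. Q)" for Q
    by (cases Q) (simp_all add: Measurable.pred_def)
  have a: "Measurable.pred M (\<lambda>\<omega>. \<forall>\<tau>. \<tau> < k \<longrightarrow> X (Suc \<tau>) \<omega> = h ! \<tau>)"
  proof (rule pred_intros_countable(1))
    fix \<tau>
    show "Measurable.pred M (\<lambda>\<omega>. \<tau> < k \<longrightarrow> X (Suc \<tau>) \<omega> = h ! \<tau>)"
      by (rule pred_intros_logic(4)[OF c m])
  qed
  show ?thesis unfolding hist_iff
    by (rule pred_intros_logic(3)[OF c a])
qed

lemma uniform_bound:
  fixes P :: "'b \<Rightarrow> nat \<Rightarrow> bool"
  assumes "finite S" "\<forall>x\<in>S. \<exists>n. P x n"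
  shows "\<exists>N. \<forall>x\<in>S. \<exists>n\<le>N. P x n"
proof (rule exI[where x="Max ((\<lambda>x. SOME n. P x n) ` S)"], rule ballI)
  fix x assume x: "x \<in> S"
  have ex: "\<exists>n. P x n" using assms(2) x by (rule bspec)
  have p: "P x (SOME n. P x n)" by (rule someI_ex[OF ex])
  have "(SOME n. P x n) \<in> (\<lambda>x. SOME n. P x n) ` S" using x by (rule imageI)
  then have le: "(SOME n. P x n) \<le> Max ((\<lambda>x. SOME n. P x n) ` S)"
    by (rule Max_ge[OF finite_imageI[OF assms(1)]])
  show "\<exists>n\<le>Max ((\<lambda>x. SOME n. P x n) ` S). P x n"
    using p le by (intro exI[where x="SOME n. P x n"] conjI)
qed

theorem lemma5:
  fixes M :: "'a measure" and l :: nat and pred :: "nat \<Rightarrow> nat"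
    and label :: "nat \<Rightarrow> int" and X :: "nat \<Rightarrow> 'a \<Rightarrow> nat \<times> nat" and \<gamma> :: real
  assumes "prob_space M"
    and "directed_cycle_pred l pred"
    and "\<And>k. k \<ge> 1 \<Longrightarrow> X k \<in> measurable M (count_space UNIV)"
    and "\<And>k \<omega>. k \<ge> 1 \<Longrightarrow> \<omega> \<in> space M \<Longrightarrow> X k \<omega> \<in> {1..l} \<times> {1..l}"
    and "\<gamma> > 0"
    and "\<And>k. k \<ge> 1 \<Longrightarrow> AE \<omega> in M. label (fst (X k \<omega>)) \<noteq> label (snd (X k \<omega>)) \<longrightarrow>
            X (Suc k) \<omega> \<in> {fst (X k \<omega>), pred (fst (X k \<omega>))} \<times> {snd (X k \<omega>), pred (snd (X k \<omega>))}"
    and "\<And>k h i j. k \<ge> 1 \<Longrightarrow> \<P>(\<omega> in M. hist X k \<omega> = h) > 0 \<Longrightarrow> last h = (i, j) \<Longrightarrow>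
            label i \<noteq> label j \<Longrightarrow>
            \<P>(\<omega> in M. X (Suc k) \<omega> = (i, pred j) \<bar> hist X k \<omega> = h) \<ge> \<gamma> \<and>
            \<P>(\<omega> in M. X (Suc k) \<omega> = (pred i, j) \<bar> hist X k \<omega> = h) \<ge> \<gamma> \<and>
            \<P>(\<omega> in M. X (Suc k) \<omega> \<in> {(i, j), (pred i, pred j)} \<bar> hist X k \<omega> = h) \<ge> \<gamma>"
    and "\<And>k h i j. k \<ge> 1 \<Longrightarrow> \<P>(\<omega> in M. hist X k \<omega> = h) > 0 \<Longrightarrow> last h = (i, j) \<Longrightarrow>
            label i = label j \<Longrightarrow>
            \<P>(\<omega> in M. X (Suc k) \<omega> = (i, j) \<bar> hist X k \<omega> = h) = 1"
  shows "\<exists>kstar::nat. kstar > 0 \<and> (\<exists>\<mu>::nat \<Rightarrow> real. (\<forall>k\<ge>kstar. 0 < \<mu> k \<and> \<mu> k < 1) \<and>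
           (\<forall>i1 j1 k. k \<ge> kstar \<longrightarrow> \<P>(\<omega> in M. X 1 \<omega> = (i1, j1)) > 0 \<longrightarrow>
              \<P>(\<omega> in M. label (fst (X (Suc k) \<omega>)) = label (snd (X (Suc k) \<omega>)) \<bar> X 1 \<omega> = (i1, j1))
                \<ge> \<mu> k))"
proof -
  interpret prob_space M by fact
  note dc = assms(2)[unfolded directed_cycle_pred_def]
  define step where "step = (\<lambda>(i,j). if label i = label j then (i,j) else (i, pred j))"
  define E where "E = (\<lambda>q. label (fst q) = label (snd q))"
  have stepE: "\<And>q. E q \<Longrightarrow> step q = q" unfolding E_def step_def by auto
  have stay: "E ((step^^(m+d)) p)" if "E ((step^^m) p)" for p m d
  proof (induction d)
    case 0 then show ?case using that by simp
  next
    case (Suc d) then show ?case using stepE by simp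
  qed
  have path: "E ((step^^n) (i,j)) \<or> (step^^n) (i,j) = (i,(pred^^n) j)" for i j n
  proof (induction n)
    case 0 then show ?case by simp
  next
    case (Suc n)
    then show ?case
    proof
      assume "E ((step^^n) (i,j))"
      then show ?thesis using stepE by simp
    next
      assume h: "(step^^n) (i,j) = (i,(pred^^n) j)"
      show ?thesis
      proof (cases "E ((step^^n) (i,j))")
        case True then show ?thesis using stepE by simp
      next
        case False then show ?thesis using h by (simp add: step_def E_def)
      qed
    qed
  qed
  have reach: "\<forall>x\<in>{1..l}\<times>{1..l}. \<exists>n. E ((step^^n) x)"
  proof
    fix x assume x: "x \<in> {1..l}\<times>{1..l}"
    obtain i j where ij: "x = (i,j)" by (cases x)
    have "j \<in> {1..l}" "i \<in> {1..l}" using x ij by auto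
    then obtain n where "(pred^^n) j = i" using dc by blast
    then have "E ((step^^n) x)" using path[of n i j] ij by (auto simp: E_def)
    then show "\<exists>n. E ((step^^n) x)" by blast
  qed
  have fin: "finite ({1..l}\<times>{1..l})" by simp
  have "\<exists>N. \<forall>x\<in>{1..l}\<times>{1..l}. \<exists>n\<le>N. E ((step^^n) x)"
    by (rule uniform_bound[OF fin reach])
  then obtain N where N: "\<forall>x\<in>{1..l}\<times>{1..l}. \<exists>n\<le>N. E ((step^^n) x)" ..
  have Nall: "E ((step^^m) x)" if "x \<in> {1..l}\<times>{1..l}" "m \<ge> N" for x m
  proof -
    from bspec[OF N that(1)] obtain n where n: "n \<le> N" "E ((step^^n) x)" by (elim exE conjE)
    have "n \<le> m" using n that by simp
    then obtain d where d: "m = n + d" using le_Suc_ex by blast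
    show ?thesis unfolding d by (rule stay[OF n(2)])
  qed
  define c where "c = min \<gamma> 1"
  have c: "0 < c" "c \<le> 1" "c \<le> \<gamma>" using assms(5) by (auto simp: c_def)
  define H where "H p n = map (\<lambda>\<tau>. (step^^(\<tau>-1)) p) [1..<Suc n]" for p n
  have measH: "{\<omega>\<in>space M. hist X k \<omega> = h} \<in> sets M" for k h
    using hist_pred[of X M k h] assms(3) by (simp add: Measurable.pred_def)
  have measX: "{\<omega>\<in>space M. X (Suc k) \<omega> = q} \<in> sets M" for k q
    using pred_count_space_const1[OF assms(3)[of "Suc k"], of q] by (simp add: Measurable.pred_def)
  have nthH: "\<tau> < n \<Longrightarrow> H p n ! \<tau> = (step^^\<tau>) p" for p n \<tau> unfolding H_def by (simp del: upt_Suc)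
  have lenH: "length (H p n) = n" for p n by (simp add: H_def)
  have Hsuc: "H p (Suc n) = H p n @ [(step^^n) p]" for p n by (simp add: H_def)
  have histsuc: "hist X (Suc n) \<omega> = hist X n \<omega> @ [X (Suc n) \<omega>]" for n \<omega> by (simp add: hist_def)
  have lenhist: "length (hist X n \<omega>) = n" for n \<omega> by (simp add: hist_def)
  have key: "prob {\<omega>\<in>space M. hist X (Suc n) \<omega> = H p (Suc n)} \<ge> c^n * prob {\<omega>\<in>space M. X 1 \<omega> = p}" for p n
  proof (induction n)
    case 0
    have "{\<omega>\<in>space M. hist X (Suc 0) \<omega> = H p (Suc 0)} = {\<omega>\<in>space M. X 1 \<omega> = p}"
      by (auto simp: hist_def H_def)
    then show ?case by simp
  next
    case (Suc n)
    define P1 where "P1 = prob {\<omega>\<in>space M. X 1 \<omega> = p}"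
    define B where "B = {\<omega>\<in>space M. hist X (Suc n) \<omega> = H p (Suc n)}"
    define q where "q = (step^^(Suc n)) p"
    have ev: "{\<omega>\<in>space M. hist X (Suc (Suc n)) \<omega> = H p (Suc (Suc n))}
        = {\<omega>\<in>space M. X (Suc (Suc n)) \<omega> = step ((step^^n) p) \<and> hist X (Suc n) \<omega> = H p (Suc n)}"
      unfolding histsuc[of "Suc n"] Hsuc[of p "Suc n"]
      using lenH lenhist by (auto simp: append_eq_append_conv)
    show ?case
    proof (cases "P1 > 0")
      case False
      then have "P1 = 0" using measure_nonneg[of M] P1_def by (metis less_eq_real_def)
      then show ?thesis using P1_def by simp
    next
      case True
      have IH: "prob B \<ge> c^n * P1" using Suc.IH B_def P1_def by simp
      have Bpos: "prob B > 0" using IH c True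
        by (meson less_le_trans mult_pos_pos zero_less_power)
      obtain i j where ij: "(step^^n) p = (i,j)" by fastforce
      have lastH: "last (H p (Suc n)) = (i,j)" using ij by (simp add: Hsuc)
      have cnd: "\<P>(\<omega> in M. X (Suc (Suc n)) \<omega> = step ((step^^n) p) \<bar> hist X (Suc n) \<omega> = H p (Suc n)) \<ge> c"
      proof (cases "label i = label j")
        case True
        then have "step ((step^^n) p) = (i,j)" using ij by (simp add: step_def)
        then show ?thesis using assms(8)[of "Suc n" "H p (Suc n)" i j] Bpos B_def lastH True c by simp
      next
        case False
        then have "step ((step^^n) p) = (i,pred j)" using ij by (simp add: step_def)
        then show ?thesis using assms(7)[of "Suc n" "H p (Suc n)" i j] Bpos B_def lastH False c by simp
      qed
      then have "prob {\<omega>\<in>space M. X (Suc (Suc n)) \<omega> = step ((step^^n) p) \<and> hist X (Suc n) \<omega> = H p (Suc n)} / prob B \<ge> c"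
        by (simp add: cond_prob_def B_def)
      then have "prob {\<omega>\<in>space M. X (Suc (Suc n)) \<omega> = step ((step^^n) p) \<and> hist X (Suc n) \<omega> = H p (Suc n)} \<ge> c * prob B"
        using Bpos by (simp add: le_divide_eq)
      moreover have "c * prob B \<ge> c * (c^n * P1)" using IH c by (simp add: mult_left_mono)
      ultimately show ?thesis using ev P1_def by (simp add: mult.assoc)
    qed
  qed
  show ?thesis
  proof (intro exI conjI allI impI)
    show "Suc N > 0" by simp
    show "0 < c^k / 2" for k using c by simp
    show "c^k / 2 < 1" for k
    proof -
      have "c^k \<le> 1" using c by (simp add: power_le_one)
      then show ?thesis by simp
    qed
    fix i1 j1 k assume k: "Suc N \<le> k" and P1: "\<P>(\<omega> in M. X 1 \<omega> = (i1, j1)) > 0"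
    define p where "p = (i1,j1)"
    define P1 where "P1 = prob {\<omega>\<in>space M. X 1 \<omega> = p}"
    have P1pos: "P1 > 0" using P1 by (simp add: P1_def p_def)
    have "{\<omega>\<in>space M. X 1 \<omega> = p} \<noteq> {}"
    proof
      assume e: "{\<omega>\<in>space M. X 1 \<omega> = p} = {}"
      have "P1 = 0" unfolding P1_def e by simp
      then show False using P1pos by simp
    qed
    then obtain \<omega>0 where "\<omega>0 \<in> space M" "X 1 \<omega>0 = p" by auto
    then have prange: "p \<in> {1..l}\<times>{1..l}" using assms(4)[of 1 \<omega>0] by simp
    have Ek: "E ((step^^k) p)" using Nall[OF prange] k by simp
    have sub: "{\<omega>\<in>space M. hist X (Suc k) \<omega> = H p (Suc k)} \<subseteq>
        {\<omega>\<in>space M. label (fst (X (Suc k) \<omega>)) = label (snd (X (Suc k) \<omega>)) \<and> X 1 \<omega> = p}"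
    proof
      fix \<omega> assume w: "\<omega> \<in> {\<omega>\<in>space M. hist X (Suc k) \<omega> = H p (Suc k)}"
      then have h: "\<forall>\<tau><Suc k. X (Suc \<tau>) \<omega> = H p (Suc k) ! \<tau>" by (simp add: hist_iff)
      have "X (Suc k) \<omega> = (step^^k) p" using h[rule_format, of k] nthH[of k "Suc k" p] by simp
      then have L: "label (fst (X (Suc k) \<omega>)) = label (snd (X (Suc k) \<omega>))" using Ek by (simp add: E_def)
      have X1: "X 1 \<omega> = p" using h[rule_format, of 0] nthH[of 0 "Suc k" p] by simp
      show "\<omega> \<in> {\<omega>\<in>space M. label (fst (X (Suc k) \<omega>)) = label (snd (X (Suc k) \<omega>)) \<and> X 1 \<omega> = p}"
        using w L X1 by blast
    qed
    have measL: "{\<omega>\<in>space M. label (fst (X (Suc k) \<omega>)) = label (snd (X (Suc k) \<omega>)) \<and> X 1 \<omega> = p} \<in> sets M"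
    proof -
      have e: "{\<omega>\<in>space M. label (fst (X (Suc k) \<omega>)) = label (snd (X (Suc k) \<omega>)) \<and> X 1 \<omega> = p}
        = (X (Suc k) -` {q. label (fst q) = label (snd q)} \<inter> space M) \<inter> (X 1 -` {p} \<inter> space M)" by auto
      have m1: "X (Suc k) -` {q. label (fst q) = label (snd q)} \<inter> space M \<in> sets M"
        by (rule measurable_sets[OF assms(3)]) auto
      have m2: "X 1 -` {p} \<inter> space M \<in> sets M"
        by (rule measurable_sets[OF assms(3)]) auto
      show ?thesis unfolding e using m1 m2 by (rule sets.Int)
    qed
    have "prob {\<omega>\<in>space M. label (fst (X (Suc k) \<omega>)) = label (snd (X (Suc k) \<omega>)) \<and> X 1 \<omega> = p} \<ge> c^k * P1"
      using key[of k p] finite_measure_mono[OF sub measL] unfolding P1_def by linarith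
    then have "prob {\<omega>\<in>space M. label (fst (X (Suc k) \<omega>)) = label (snd (X (Suc k) \<omega>)) \<and> X 1 \<omega> = p} / P1 \<ge> c^k"
      using P1pos by (simp add: le_divide_eq)
    moreover have "c^k / 2 \<le> c^k" using c by simp
    moreover have "\<P>(\<omega> in M. label (fst (X (Suc k) \<omega>)) = label (snd (X (Suc k) \<omega>)) \<bar> X 1 \<omega> = (i1, j1))
       = prob {\<omega>\<in>space M. label (fst (X (Suc k) \<omega>)) = label (snd (X (Suc k) \<omega>)) \<and> X 1 \<omega> = p} / P1"
      by (simp add: cond_prob_def P1_def p_def)
    ultimately show "\<P>(\<omega> in M. label (fst (X (Suc k) \<omega>)) = label (snd (X (Suc k) \<omega>)) \<bar> X 1 \<omega> = (i1, j1)) \<ge> c^k / 2"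
      by linarith
  qed
qed

end
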